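(* Let $n\geq 3$ and let $L^B$ be a blow-up of the Boolean lattice $L\cong\mathbf{2}^n$. Then the independence number of $G^c(L^B)_{SR}$ is $\beta\bigl(G^c(L^B)_{SR}\bigr)=2^{n-1}-1$.
   Context: Blow-up: keep $0,1$ of $L=\mathbf{2}^n$ and replace every $x\in L\setminus\{0,1\}$ by a finite nonempty chain $C_x$, ordered by the chain order within $C_x$ and, for $a\in C_x,b\in C_y$, $x\neq y$, by $a\leq b$ iff $x\leq y$ in $L$; $0$ least, $1$ greatest. $Z^*(M)$ is the set of nonzero $a$ with $a\wedge b=0$ for some $b\neq0$; $G^c(M)$ has vertex set $Z^*(M)$, distinct $a,b$ adjacent iff $a\wedge b\neq 0$. In a connected graph, $u$ is maximally distant from $v$ if $d(v,w)\leq d(u,v)$ for all neighbours $w$ of $u$; mutually maximally distant means each is maximally distant from the other. $G_{SR}$ has as vertices those $u$ mutually maximally distant from some $v$, distinct vertices adjacent iff mutually maximally distant in $G$. $\beta(G)$ is the maximum size of a set of pairwise non-adjacent vertices. *)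

theory Defs
  imports Main
begin

text \<open>The Boolean lattice 2^n is represented as the powerset of {0..<n}.
 The blow-up replaces every x with {} < x < {0..<n} by a finite nonempty chain C_x,
 represented (up to isomorphism) as {0..<k x} with k x >= 1.\<close>

datatype blow = Bot | Top | Mid "nat set" nat

definition proper_elt :: "nat \<Rightarrow> nat set \<Rightarrow> bool" where
  "proper_elt n x \<longleftrightarrow> x \<subseteq> {0..<n} \<and> x \<noteq> {} \<and> x \<noteq> {0..<n}"

definition blow_carrier :: "nat \<Rightarrow> (nat set \<Rightarrow> nat) \<Rightarrow> blow set" where
  "blow_carrier n k = {Bot, Top} \<union> {Mid x i | x i. proper_elt n x \<and> i < k x}"

fun blow_le :: "blow \<Rightarrow> blow \<Rightarrow> bool" where
  "blow_le Bot _ = True"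
| "blow_le _ Top = True"
| "blow_le Top _ = False"
| "blow_le (Mid _ _) Bot = False"
| "blow_le (Mid x i) (Mid y j) = ((x = y \<and> i \<le> j) \<or> x \<subset> y)"

definition meet_zero :: "nat \<Rightarrow> (nat set \<Rightarrow> nat) \<Rightarrow> blow \<Rightarrow> blow \<Rightarrow> bool" where
  "meet_zero n k a b \<longleftrightarrow>
     (\<forall>c\<in>blow_carrier n k. blow_le c a \<and> blow_le c b \<longrightarrow> c = Bot)"

definition Zstar :: "nat \<Rightarrow> (nat set \<Rightarrow> nat) \<Rightarrow> blow set" where
  "Zstar n k = {a \<in> blow_carrier n k. a \<noteq> Bot \<and>
                   (\<exists>b\<in>blow_carrier n k. b \<noteq> Bot \<and> meet_zero n k a b)}"

definition Gc_adj :: "nat \<Rightarrow> (nat set \<Rightarrow> nat) \<Rightarrow> blow \<Rightarrow> blow \<Rightarrow> bool" where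
  "Gc_adj n k a b \<longleftrightarrow> a \<in> Zstar n k \<and> b \<in> Zstar n k \<and> a \<noteq> b \<and> \<not> meet_zero n k a b"

definition is_walk :: "'a set \<Rightarrow> ('a \<Rightarrow> 'a \<Rightarrow> bool) \<Rightarrow> 'a list \<Rightarrow> bool" where
  "is_walk V E xs \<longleftrightarrow> xs \<noteq> [] \<and> set xs \<subseteq> V \<and>
     (\<forall>i. Suc i < length xs \<longrightarrow> E (xs ! i) (xs ! Suc i))"

definition gdist :: "'a set \<Rightarrow> ('a \<Rightarrow> 'a \<Rightarrow> bool) \<Rightarrow> 'a \<Rightarrow> 'a \<Rightarrow> nat" where
  "gdist V E u v = (LEAST m. \<exists>xs. is_walk V E xs \<and> hd xs = u \<and> last xs = v \<and> length xs = Suc m)"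

definition max_distant :: "'a set \<Rightarrow> ('a \<Rightarrow> 'a \<Rightarrow> bool) \<Rightarrow> 'a \<Rightarrow> 'a \<Rightarrow> bool" where
  "max_distant V E u v \<longleftrightarrow> (\<forall>w\<in>V. E u w \<longrightarrow> gdist V E v w \<le> gdist V E u v)"

definition mutually_max_distant :: "'a set \<Rightarrow> ('a \<Rightarrow> 'a \<Rightarrow> bool) \<Rightarrow> 'a \<Rightarrow> 'a \<Rightarrow> bool" where
  "mutually_max_distant V E u v \<longleftrightarrow> max_distant V E u v \<and> max_distant V E v u"

definition SR_vertices :: "'a set \<Rightarrow> ('a \<Rightarrow> 'a \<Rightarrow> bool) \<Rightarrow> 'a set" where
  "SR_vertices V E = {u \<in> V. \<exists>v\<in>V. mutually_max_distant V E u v}"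

definition SR_adj :: "'a set \<Rightarrow> ('a \<Rightarrow> 'a \<Rightarrow> bool) \<Rightarrow> 'a \<Rightarrow> 'a \<Rightarrow> bool" where
  "SR_adj V E u v \<longleftrightarrow> u \<in> SR_vertices V E \<and> v \<in> SR_vertices V E \<and> u \<noteq> v \<and>
      mutually_max_distant V E u v"

definition indep_number :: "'a set \<Rightarrow> ('a \<Rightarrow> 'a \<Rightarrow> bool) \<Rightarrow> nat" where
  "indep_number V E = Max {card S | S. S \<subseteq> V \<and> (\<forall>a\<in>S. \<forall>b\<in>S. \<not> E a b)}"

end

theory Submission imports Defs begin

fun und :: "blow \<Rightarrow> nat set" where
  "und (Mid x i) = x" | "und Bot = {}" | "und Top = {}"

lemma blow_le_refl: "blow_le a a" by (cases a) auto

lemma gdist_le: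
  assumes "is_walk V E xs" "hd xs = u" "last xs = v" "length xs = Suc m"
  shows "gdist V E u v \<le> m"
  unfolding gdist_def by (rule Least_le) (use assms in blast)

lemma gdist_walk:
  assumes "is_walk V E xs" "hd xs = u" "last xs = v"
  shows "\<exists>ys. is_walk V E ys \<and> hd ys = u \<and> last ys = v \<and> length ys = Suc (gdist V E u v)"
proof -
  have "\<exists>m. \<exists>xs. is_walk V E xs \<and> hd xs = u \<and> last xs = v \<and> length xs = Suc m"
    using assms by (metis is_walk_def length_greater_0_conv Suc_pred)
  then show ?thesis unfolding gdist_def by (rule LeastI_ex)
qed

lemma gdist_0: "u \<in> V \<Longrightarrow> gdist V E u u = 0"
  using gdist_le[of V E "[u]" u u 0] by (auto simp: is_walk_def)

lemma gdist_1:
  assumes "u \<in> V" "v \<in> V" "E u v" "u \<noteq> v"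
  shows "gdist V E u v = 1"
proof -
  have w: "is_walk V E [u,v]" using assms by (auto simp: is_walk_def less_Suc_eq)
  have le: "gdist V E u v \<le> 1" using gdist_le[OF w] by auto
  obtain ys where ys: "is_walk V E ys" "hd ys = u" "last ys = v" "length ys = Suc (gdist V E u v)"
    using gdist_walk[OF w] by auto
  have "gdist V E u v \<noteq> 0"
  proof
    assume "gdist V E u v = 0"
    then have "length ys = 1" using ys by simp
    then obtain a where "ys = [a]" by (cases ys) auto
    then show False using ys assms by auto
  qed
  then show ?thesis using le by simp
qed

lemma gdist_2:
  assumes "u \<in> V" "v \<in> V" "w \<in> V" "E u w" "E w v" "\<not> E u v" "u \<noteq> v"
  shows "gdist V E u v = 2"
proof -
  have w: "is_walk V E [u,w,v]" using assms by (auto simp: is_walk_def less_Suc_eq nth_Cons split: nat.splits)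
  have le: "gdist V E u v \<le> 2" using gdist_le[OF w] by auto
  obtain ys where ys: "is_walk V E ys" "hd ys = u" "last ys = v" "length ys = Suc (gdist V E u v)"
    using gdist_walk[OF w] by auto
  have "gdist V E u v \<noteq> 0"
  proof
    assume "gdist V E u v = 0"
    then have "length ys = 1" using ys by simp
    then obtain a where "ys = [a]" by (cases ys) auto
    then show False using ys assms by auto
  qed
  moreover have "gdist V E u v \<noteq> 1"
  proof
    assume "gdist V E u v = 1"
    then have "length ys = 2" using ys by simp
    then obtain a b where "ys = [a,b]" by (cases ys; cases "tl ys") auto
    then show False using ys assms unfolding is_walk_def by (metis One_nat_def \<open>length ys = 2\<close> last_ConsL last_ConsR list.sel(1) lessI not_Cons_self2 nth_Cons_0 nth_Cons_Suc numeral_2_eq_2)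
  qed
  ultimately show ?thesis using le by simp
qed

lemma card_intersecting:
  assumes "finite A" "F \<subseteq> Pow A" "\<forall>X\<in>F. \<forall>Y\<in>F. X \<inter> Y \<noteq> {}"
  shows "2 * card F \<le> 2 ^ card A"
proof -
  let ?G = "(\<lambda>X. A - X) ` F"
  have inj: "inj_on (\<lambda>X. A - X) F" using assms(2) by (auto simp: inj_on_def) 
  have fF: "finite F" using assms(1,2) by (meson finite_Pow_iff rev_finite_subset)
  have disj: "F \<inter> ?G = {}" using assms(3) by blast
  have "card (F \<union> ?G) = card F + card ?G" using card_Un_disjoint[OF fF _ disj] fF by simp
  also have "card ?G = card F" using card_image[OF inj] .
  finally have "card (F \<union> ?G) = 2 * card F" by simp
  moreover have "card (F \<union> ?G) \<le> card (Pow A)"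
    by (rule card_mono) (use assms in auto)
  ultimately show ?thesis using card_Pow[of A] assms(1) by simp
qed


context
  fixes n :: nat and k :: "nat set \<Rightarrow> nat"
  assumes n3: "n \<ge> 3" and kpos: "\<And>x. proper_elt n x \<Longrightarrow> k x \<ge> 1"
begin

lemma meet_zero_Mid:
  assumes px: "proper_elt n x" and py: "proper_elt n y"
  shows "meet_zero n k (Mid x i) (Mid y j) \<longleftrightarrow> x \<inter> y = {}"
proof
  assume mz: "meet_zero n k (Mid x i) (Mid y j)"
  show "x \<inter> y = {}"
  proof (rule ccontr)
    assume ne: "x \<inter> y \<noteq> {}"
    have pz: "proper_elt n (x \<inter> y)" using px py ne unfolding proper_elt_def by blast
    then have "Mid (x \<inter> y) 0 \<in> blow_carrier n k" using kpos[OF pz] by (auto simp: blow_carrier_def)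
    moreover have "blow_le (Mid (x \<inter> y) 0) (Mid x i)" by (cases "x \<inter> y = x") auto
    moreover have "blow_le (Mid (x \<inter> y) 0) (Mid y j)" by (cases "x \<inter> y = y") auto
    ultimately show False using mz unfolding meet_zero_def by blast
  qed
next
  assume d: "x \<inter> y = {}"
  show "meet_zero n k (Mid x i) (Mid y j)"
    unfolding meet_zero_def
  proof (intro ballI impI)
    fix c assume c: "c \<in> blow_carrier n k" "blow_le c (Mid x i) \<and> blow_le c (Mid y j)"
    show "c = Bot"
    proof (cases c)
      case (Mid z l)
      then have "proper_elt n z" using c by (auto simp: blow_carrier_def)
      then have "z \<noteq> {}" by (simp add: proper_elt_def)
      moreover have "z \<subseteq> x" "z \<subseteq> y" using c Mid by auto
      ultimately show ?thesis using d by blast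
    qed (use c in auto)
  qed
qed

lemma compl_proper: "proper_elt n x \<Longrightarrow> proper_elt n ({0..<n} - x)"
  unfolding proper_elt_def by blast

lemma Zstar_eq: "Zstar n k = {Mid x i | x i. proper_elt n x \<and> i < k x}"
proof
  show "Zstar n k \<subseteq> {Mid x i | x i. proper_elt n x \<and> i < k x}"
  proof
    fix a assume a: "a \<in> Zstar n k"
    then obtain b where b: "b \<in> blow_carrier n k" "b \<noteq> Bot" "meet_zero n k a b"
      by (auto simp: Zstar_def)
    have "a \<noteq> Top"
    proof
      assume "a = Top"
      then have "blow_le b a" by (cases b) auto
      then show False using b blow_le_refl[of b] unfolding meet_zero_def by blast
    qed
    then show "a \<in> {Mid x i | x i. proper_elt n x \<and> i < k x}"
      using a by (auto simp: Zstar_def blow_carrier_def)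
  qed
next
  show "{Mid x i | x i. proper_elt n x \<and> i < k x} \<subseteq> Zstar n k"
  proof clarify
    fix x i assume px: "proper_elt n x" and i: "i < k x"
    have pc: "proper_elt n ({0..<n} - x)" using compl_proper[OF px] .
    have bc: "Mid ({0..<n} - x) 0 \<in> blow_carrier n k" using kpos[OF pc] pc
      by (auto simp: blow_carrier_def)
    have "meet_zero n k (Mid x i) (Mid ({0..<n} - x) 0)"
      using meet_zero_Mid[OF px pc] by blast
    then show "Mid x i \<in> Zstar n k" using bc px i
      by (auto simp: Zstar_def blow_carrier_def)
  qed
qed

lemma inZ: "u \<in> Zstar n k \<longleftrightarrow> (\<exists>x i. u = Mid x i \<and> proper_elt n x \<and> i < k x)"
  using Zstar_eq by auto

lemma und_proper: "u \<in> Zstar n k \<Longrightarrow> proper_elt n (und u)"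
  using inZ by auto

lemma adj_iff: "Gc_adj n k u v \<longleftrightarrow> u \<in> Zstar n k \<and> v \<in> Zstar n k \<and> u \<noteq> v \<and> und u \<inter> und v \<noteq> {}"
  unfolding Gc_adj_def using inZ meet_zero_Mid by auto

lemma single_Z: "a < n \<Longrightarrow> Mid {a} 0 \<in> Zstar n k"
proof -
  assume a: "a < n"
  have p: "proper_elt n {a}" unfolding proper_elt_def
  proof (intro conjI)
    show "{a} \<subseteq> {0..<n}" "{a} \<noteq> {}" using a by auto
    show "{a} \<noteq> {0..<n}"
    proof
      assume h: "{a} = {0..<n}"
      have "card {a} = card {0..<n}" by (simp only: h)
      then show False using n3 by simp
    qed
  qed
  show ?thesis using inZ kpos[OF p] p by auto
qed

lemma dist_eq:
  assumes u: "u \<in> Zstar n k" and v: "v \<in> Zstar n k"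
  shows "gdist (Zstar n k) (Gc_adj n k) u v =
     (if u = v then 0 else if und u \<inter> und v \<noteq> {} then 1 else 2)"
proof -
  consider "u = v" | "u \<noteq> v" "und u \<inter> und v \<noteq> {}" | "u \<noteq> v" "und u \<inter> und v = {}" by blast
  then show ?thesis
  proof cases
    case 1 then show ?thesis using gdist_0 u by simp
  next
    case 2 then show ?thesis using gdist_1[of u _ v] u v adj_iff by simp
  next
    case 3
    obtain a where a: "a \<in> und u" using und_proper[OF u] by (auto simp: proper_elt_def)
    obtain b where b: "b \<in> und v" using und_proper[OF v] by (auto simp: proper_elt_def)
    have ab: "a < n" "b < n" using a b und_proper[OF u] und_proper[OF v]
      by (auto simp: proper_elt_def)
    have "a \<noteq> b" using a b 3 by blast
    have pw: "proper_elt n {a, b}" unfolding proper_elt_def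
    proof (intro conjI)
      show "{a,b} \<subseteq> {0..<n}" using ab by auto
      show "{a,b} \<noteq> {}" by auto
      have "card {a,b} \<le> 2" by (simp add: card_insert_le_m1)
      then show "{a,b} \<noteq> {0..<n}" using n3 by auto
    qed
    define w where "w = Mid {a,b} 0"
    have wZ: "w \<in> Zstar n k" using inZ kpos[OF pw] pw w_def by auto
    have "w \<noteq> u" using a b 3 w_def by auto
    moreover have "w \<noteq> v" using a b 3 w_def by auto
    ultimately have "Gc_adj n k u w" "Gc_adj n k w v"
      using adj_iff u v wZ a b w_def by auto
    moreover have "\<not> Gc_adj n k u v" using adj_iff 3 by auto
    ultimately show ?thesis using gdist_2[OF u v wZ] 3 by simp
  qed
qed


abbreviation "ZZ \<equiv> Zstar n k"
abbreviation "EE \<equiv> Gc_adj n k"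

lemma not_md:
  assumes u: "u \<in> ZZ" and v: "v \<in> ZZ" and uv: "u \<noteq> v" and ne: "und u \<inter> und v \<noteq> {}"
    and a: "a \<in> und u" "a \<notin> und v"
  shows "\<not> max_distant ZZ EE u v"
proof
  assume md: "max_distant ZZ EE u v"
  have an: "a < n" using a und_proper[OF u] by (auto simp: proper_elt_def)
  define w where "w = Mid {a} 0"
  have wZ: "w \<in> ZZ" using single_Z[OF an] w_def by simp
  have "w \<noteq> u"
  proof
    assume "w = u" then have "und u = {a}" using w_def by auto
    then show False using ne a by auto
  qed
  then have "EE u w" using adj_iff u wZ a w_def by auto
  then have "gdist ZZ EE v w \<le> gdist ZZ EE u v" using md wZ unfolding max_distant_def by blast
  moreover have "gdist ZZ EE u v = 1" using dist_eq[OF u v] uv ne by simp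
  moreover have "gdist ZZ EE v w = 2" using dist_eq[OF v wZ] a w_def by auto
  ultimately show False by simp
qed

lemma mmd_iff:
  assumes u: "u \<in> ZZ" and v: "v \<in> ZZ" and uv: "u \<noteq> v"
  shows "mutually_max_distant ZZ EE u v \<longleftrightarrow> (und u = und v \<or> und u \<inter> und v = {})"
proof
  assume m: "mutually_max_distant ZZ EE u v"
  show "und u = und v \<or> und u \<inter> und v = {}"
  proof (rule ccontr)
    assume h: "\<not> (und u = und v \<or> und u \<inter> und v = {})"
    then consider a where "a \<in> und u" "a \<notin> und v" | a where "a \<in> und v" "a \<notin> und u" by blast
    then show False
    proof cases
      case 1 then show False using not_md[OF u v uv] h m unfolding mutually_max_distant_def by blast
    next
      case 2 then show False using not_md[OF v u] uv h m unfolding mutually_max_distant_def by blast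
    qed
  qed
next
  assume h: "und u = und v \<or> und u \<inter> und v = {}"
  have le2: "\<And>x y. x \<in> ZZ \<Longrightarrow> y \<in> ZZ \<Longrightarrow> gdist ZZ EE x y \<le> 2" using dist_eq by simp
  have nu: "und u \<noteq> {}" using und_proper[OF u] by (simp add: proper_elt_def)
  show "mutually_max_distant ZZ EE u v"
  proof (cases "und u = und v")
    case True
    have d1: "gdist ZZ EE u v = 1" "gdist ZZ EE v u = 1" using dist_eq[OF u v] dist_eq[OF v u] uv True nu by auto
    have "max_distant ZZ EE u v" unfolding max_distant_def
    proof (intro ballI impI)
      fix w assume w: "w \<in> ZZ" "EE u w"
      then have "und u \<inter> und w \<noteq> {}" using adj_iff by auto
      then show "gdist ZZ EE v w \<le> gdist ZZ EE u v" using dist_eq[OF v w(1)] d1 True by auto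
    qed
    moreover have "max_distant ZZ EE v u" unfolding max_distant_def
    proof (intro ballI impI)
      fix w assume w: "w \<in> ZZ" "EE v w"
      then have "und v \<inter> und w \<noteq> {}" using adj_iff by auto
      then show "gdist ZZ EE u w \<le> gdist ZZ EE v u" using dist_eq[OF u w(1)] d1 True by auto
    qed
    ultimately show ?thesis by (simp add: mutually_max_distant_def)
  next
    case False
    then have "und u \<inter> und v = {}" using h by blast
    then have d2: "gdist ZZ EE u v = 2" "gdist ZZ EE v u = 2" using dist_eq[OF u v] dist_eq[OF v u] uv by auto
    show ?thesis unfolding mutually_max_distant_def max_distant_def using d2 le2 u v by auto
  qed
qed

lemma SR_V: "SR_vertices ZZ EE = ZZ"
proof
  show "SR_vertices ZZ EE \<subseteq> ZZ" by (auto simp: SR_vertices_def)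
next
  show "ZZ \<subseteq> SR_vertices ZZ EE"
  proof
    fix u assume u: "u \<in> ZZ"
    then obtain x i where x: "u = Mid x i" "proper_elt n x" by (auto simp: inZ)
    have pc: "proper_elt n ({0..<n} - x)" using compl_proper[OF x(2)] .
    define v where "v = Mid ({0..<n} - x) 0"
    have vZ: "v \<in> ZZ" using inZ kpos[OF pc] pc v_def by auto
    have "u \<noteq> v" using x v_def pc by (auto simp: proper_elt_def)
    moreover have "und u \<inter> und v = {}" using x v_def by auto
    ultimately have "mutually_max_distant ZZ EE u v" using mmd_iff[OF u vZ] by simp
    then show "u \<in> SR_vertices ZZ EE" using u vZ by (auto simp: SR_vertices_def)
  qed
qed

lemma SR_adj_iff: "SR_adj ZZ EE u v \<longleftrightarrow> u \<in> ZZ \<and> v \<in> ZZ \<and> u \<noteq> v \<and> (und u = und v \<or> und u \<inter> und v = {})"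
  unfolding SR_adj_def SR_V using mmd_iff by blast

lemma upper:
  assumes S: "S \<subseteq> ZZ" "\<forall>a\<in>S. \<forall>b\<in>S. \<not> SR_adj ZZ EE a b"
  shows "card S \<le> 2 ^ (n - 1) - 1"
proof -
  have inj: "inj_on und S"
  proof (rule inj_onI)
    fix a b assume "a \<in> S" "b \<in> S" "und a = und b"
    then show "a = b" using S SR_adj_iff by blast
  qed
  define F where "F = und ` S"
  have cS: "card S = card F" using card_image[OF inj] F_def by simp
  have Fp: "\<And>X. X \<in> F \<Longrightarrow> proper_elt n X" using S und_proper F_def by auto
  have Fi: "\<forall>X\<in>F. \<forall>Y\<in>F. X \<inter> Y \<noteq> {}"
  proof (intro ballI)
    fix X Y assume X: "X \<in> F" and Y: "Y \<in> F"
    show "X \<inter> Y \<noteq> {}"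
    proof (cases "X = Y")
      case True then show ?thesis using Fp[OF X] by (simp add: proper_elt_def)
    next
      case False
      obtain a b where "a \<in> S" "b \<in> S" "X = und a" "Y = und b" using X Y F_def by auto
      then show ?thesis using S SR_adj_iff False by blast
    qed
  qed
  define F' where "F' = insert {0..<n} F"
  have F'p: "F' \<subseteq> Pow {0..<n}" using Fp F'_def by (auto simp: proper_elt_def)
  have nf: "{0..<n} \<notin> F" using Fp by (auto simp: proper_elt_def)
  have ne: "{0..<n} \<noteq> ({}::nat set)" using n3 by simp
  have F'i: "\<forall>X\<in>F'. \<forall>Y\<in>F'. X \<inter> Y \<noteq> {}"
    using Fi Fp ne unfolding F'_def proper_elt_def by (auto simp: Int_absorb1 Int_absorb2)
  have fF: "finite F" using F'p F'_def by (metis finite_Pow_iff finite_atLeastLessThan finite_insert rev_finite_subset)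
  have "2 * card F' \<le> 2 ^ card {0..<n}" using card_intersecting[OF _ F'p F'i] by simp
  moreover have "card F' = card F + 1" using F'_def nf fF by simp
  moreover have "(2::nat) ^ n = 2 * 2 ^ (n - 1)" using n3 by (metis Suc_diff_1 le_trans not_less_eq_eq numeral_3_eq_3 power_Suc zero_le_one le_eq_less_or_eq less_numeral_extra(3) not_gr_zero one_le_numeral)
  ultimately show ?thesis using cS by simp
qed


lemma lower:
  "\<exists>S. S \<subseteq> ZZ \<and> (\<forall>a\<in>S. \<forall>b\<in>S. \<not> SR_adj ZZ EE a b) \<and> card S = 2 ^ (n - 1) - 1"
proof -
  define T where "T = insert 0 ` Pow {1..<n} - {{0..<n}}"
  define S where "S = (\<lambda>x. Mid x 0) ` T"
  have injI: "inj_on (insert (0::nat)) (Pow {1..<n})"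
    by (rule inj_onI) (metis PowD atLeastLessThan_iff insert_ident not_one_le_zero subset_iff)
  have cP: "card (insert (0::nat) ` Pow {1..<n}) = 2 ^ (n - 1)"
    using card_image[OF injI] card_Pow[of "{1..<n}"] by simp
  have full: "{0..<n} \<in> insert (0::nat) ` Pow {1..<n}"
  proof
    show "{0..<n} = insert 0 {1..<n}" using n3 by auto
  qed auto
  have cT: "card T = 2 ^ (n - 1) - 1"
    unfolding T_def using card_Diff_singleton[OF full] cP by simp
  have Tp: "\<And>x. x \<in> T \<Longrightarrow> proper_elt n x \<and> 0 \<in> x"
    unfolding T_def proper_elt_def using n3 by auto
  have injM: "inj_on (\<lambda>x. Mid x 0) T" by (rule inj_onI) simp
  have cS: "card S = 2 ^ (n - 1) - 1" using card_image[OF injM] cT S_def by simp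
  have SZ: "S \<subseteq> ZZ"
  proof
    fix u assume "u \<in> S"
    then obtain x where "x \<in> T" "u = Mid x 0" using S_def by auto
    then show "u \<in> ZZ" using Tp kpos inZ by fastforce
  qed
  have ind: "\<forall>a\<in>S. \<forall>b\<in>S. \<not> SR_adj ZZ EE a b"
  proof (intro ballI notI)
    fix a b assume a: "a \<in> S" and b: "b \<in> S" and ab: "SR_adj ZZ EE a b"
    obtain x where x: "x \<in> T" "a = Mid x 0" using a S_def by auto
    obtain y where y: "y \<in> T" "b = Mid y 0" using b S_def by auto
    have "0 \<in> und a \<inter> und b" using x y Tp by auto
    moreover have "und a \<noteq> und b" using x y ab SR_adj_iff by auto
    ultimately show False using ab SR_adj_iff by blast
  qed
  show ?thesis using SZ ind cS by blast
qed

end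

theorem lemma3p19:
  fixes n :: nat and k :: "nat set \<Rightarrow> nat"
  assumes "n \<ge> 3"
    and "\<And>x. proper_elt n x \<Longrightarrow> k x \<ge> 1"
  shows "indep_number (SR_vertices (Zstar n k) (Gc_adj n k))
                      (SR_adj (Zstar n k) (Gc_adj n k)) = 2 ^ (n - 1) - 1"
proof -
  let ?A = "{card S | S. S \<subseteq> SR_vertices (Zstar n k) (Gc_adj n k) \<and>
     (\<forall>a\<in>S. \<forall>b\<in>S. \<not> SR_adj (Zstar n k) (Gc_adj n k) a b)}"
  have V: "SR_vertices (Zstar n k) (Gc_adj n k) = Zstar n k" using SR_V[of n k, OF assms] .
  have ub: "\<And>y. y \<in> ?A \<Longrightarrow> y \<le> 2 ^ (n - 1) - 1" using upper[of n k, OF assms] V by auto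
  have fin: "finite ?A" by (rule finite_subset[of _ "{..2 ^ (n - 1) - 1}"]) (use ub in auto)
  have mem: "2 ^ (n - 1) - 1 \<in> ?A" using lower[of n k, OF assms] V by (simp only: mem_Collect_eq) metis
  show ?thesis unfolding indep_number_def by (rule Max_eqI[OF fin ub mem])
qed

end
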